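(* Let $\ell$ be a linear space of real sequences endowed with a norm, quasi-norm or $\alpha$-norm, such that $\ell\hookrightarrow\ell^\infty$, and let $I\colon\ell\to\ell^\infty$ be the embedding operator. Suppose $$\|I\|\le\sigma_\ell<2\|I\|,$$ where $\sigma_\ell:=\sup_{y\in B_\ell}\big(\sup_{n\in\mathbb{N}}y_n-\inf_{n\in\mathbb{N}}y_n\big)$ is the span of $\ell$. Then $I$ is not maximally non-compact; moreover $\alpha(I)\le\sigma_\ell/2$.
   Context: $B_\ell$ is the closed unit ball of $\ell$; $\ell^\infty$ is the space of bounded sequences with the sup norm. $\ell\hookrightarrow\ell^\infty$ means $\ell\subset\ell^\infty$ as a linear subspace with $\|a\|_\infty\le C\|a\|_\ell$ for some constant $C$; $\|I\|=\sup_{y\in B_\ell}\|y\|_\infty$. For a bounded map $T\colon X\to Y$, the ball measure of non-compactness is $\alpha(T)=\inf\{r>0:\ T(B_X)\subset\bigcup_{i=1}^m (y_i+rB_Y)\text{ for some } m\in\mathbb{N},\ y_i\in Y\}$; $T$ is maximally non-compact if $\alpha(T)=\|T\|$. *)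

theory Defs
  imports "HOL-Analysis.Analysis"
begin

type_synonym rseq = "nat \<Rightarrow> real"

definition seq_subspace :: "rseq set \<Rightarrow> bool" where
  "seq_subspace L \<longleftrightarrow> (\<lambda>n. 0) \<in> L \<and> (\<forall>x\<in>L. \<forall>y\<in>L. (\<lambda>n. x n + y n) \<in> L) \<and> (\<forall>c. \<forall>x\<in>L. (\<lambda>n. c * x n) \<in> L)"

definition is_norm_on :: "rseq set \<Rightarrow> (rseq \<Rightarrow> real) \<Rightarrow> bool" where
  "is_norm_on L N \<longleftrightarrow>
     (\<forall>x\<in>L. N x \<ge> 0 \<and> (N x = 0 \<longleftrightarrow> x = (\<lambda>n. 0))) \<and>
     (\<forall>c. \<forall>x\<in>L. N (\<lambda>n. c * x n) = \<bar>c\<bar> * N x) \<and>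
     (\<forall>x\<in>L. \<forall>y\<in>L. N (\<lambda>n. x n + y n) \<le> N x + N y)"

definition is_quasinorm_on :: "rseq set \<Rightarrow> (rseq \<Rightarrow> real) \<Rightarrow> bool" where
  "is_quasinorm_on L N \<longleftrightarrow>
     (\<forall>x\<in>L. N x \<ge> 0 \<and> (N x = 0 \<longleftrightarrow> x = (\<lambda>n. 0))) \<and>
     (\<forall>c. \<forall>x\<in>L. N (\<lambda>n. c * x n) = \<bar>c\<bar> * N x) \<and>
     (\<exists>K\<ge>1. \<forall>x\<in>L. \<forall>y\<in>L. N (\<lambda>n. x n + y n) \<le> K * (N x + N y))"

definition is_alpha_norm_on :: "real \<Rightarrow> rseq set \<Rightarrow> (rseq \<Rightarrow> real) \<Rightarrow> bool" where
  "is_alpha_norm_on a L N \<longleftrightarrow> 0 < a \<and> a \<le> 1 \<and>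
     (\<forall>x\<in>L. N x \<ge> 0 \<and> (N x = 0 \<longleftrightarrow> x = (\<lambda>n. 0))) \<and>
     (\<forall>c. \<forall>x\<in>L. N (\<lambda>n. c * x n) = \<bar>c\<bar> powr a * N x) \<and>
     (\<forall>x\<in>L. \<forall>y\<in>L. N (\<lambda>n. x n + y n) \<le> N x + N y)"

definition bseq :: "rseq \<Rightarrow> bool" where
  "bseq x \<longleftrightarrow> bdd_above (range (\<lambda>n. \<bar>x n\<bar>))"

definition linf_norm :: "rseq \<Rightarrow> real" where
  "linf_norm x = (SUP n. \<bar>x n\<bar>)"

definition embeds_linf :: "rseq set \<Rightarrow> (rseq \<Rightarrow> real) \<Rightarrow> bool" where
  "embeds_linf L N \<longleftrightarrow> (\<exists>C. \<forall>x\<in>L. bseq x \<and> linf_norm x \<le> C * N x)"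

definition unit_ball :: "rseq set \<Rightarrow> (rseq \<Rightarrow> real) \<Rightarrow> rseq set" where
  "unit_ball L N = {y \<in> L. N y \<le> 1}"

definition emb_norm :: "rseq set \<Rightarrow> (rseq \<Rightarrow> real) \<Rightarrow> real" where
  "emb_norm L N = (SUP y \<in> unit_ball L N. linf_norm y)"

definition span_seq :: "rseq set \<Rightarrow> (rseq \<Rightarrow> real) \<Rightarrow> real" where
  "span_seq L N = (SUP y \<in> unit_ball L N. (SUP n. y n) - (INF n. y n))"

text \<open>Ball measure of non-compactness of the embedding I: infimum of radii r > 0
  such that I(B_\<ell>) = B_\<ell> is covered by finitely many (m \<ge> 1) closed \<ell>^\<infinity>-balls of radius r.\<close>
definition alpha_emb :: "rseq set \<Rightarrow> (rseq \<Rightarrow> real) \<Rightarrow> real" where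
  "alpha_emb L N = Inf {r. r > 0 \<and> (\<exists>Y. finite Y \<and> Y \<noteq> {} \<and> (\<forall>z\<in>Y. bseq z) \<and>
       unit_ball L N \<subseteq> (\<Union>z\<in>Y. {y. bseq (\<lambda>n. y n - z n) \<and> linf_norm (\<lambda>n. y n - z n) \<le> r}))}"

definition maximally_noncompact_emb :: "rseq set \<Rightarrow> (rseq \<Rightarrow> real) \<Rightarrow> bool" where
  "maximally_noncompact_emb L N \<longleftrightarrow> alpha_emb L N = emb_norm L N"

end

theory Submission
  imports Defs
begin

lemma bseq_abs_le: "bseq y \<Longrightarrow> \<bar>y n\<bar> \<le> linf_norm y"
  unfolding bseq_def linf_norm_def by (rule cSUP_upper) auto

lemma bseq_above: "bseq y \<Longrightarrow> bdd_above (range y)"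
proof -
  assume "bseq y"
  then obtain b where "\<And>n. \<bar>y n\<bar> \<le> b" unfolding bseq_def bdd_above_def by auto
  hence "\<And>n. y n \<le> b" using abs_ge_self order_trans by blast
  thus ?thesis unfolding bdd_above_def by auto
qed

lemma bseq_below: "bseq y \<Longrightarrow> bdd_below (range y)"
proof -
  assume "bseq y"
  then obtain b where "\<And>n. \<bar>y n\<bar> \<le> b" unfolding bseq_def bdd_above_def by auto
  hence "\<And>n. - b \<le> y n" by (metis abs_le_D2 minus_le_iff)
  thus ?thesis unfolding bdd_below_def by auto
qed

lemma bseq_sup_inf:
  assumes "bseq y"
  shows "y n \<le> (SUP n. y n)" "(INF n. y n) \<le> y n"
    "(SUP n. y n) \<le> linf_norm y" "- linf_norm y \<le> (INF n. y n)"
proof -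
  show "y n \<le> (SUP n. y n)" by (rule cSUP_upper) (auto simp: bseq_above assms)
  show "(INF n. y n) \<le> y n" by (rule cINF_lower) (auto simp: bseq_below assms)
  show "(SUP n. y n) \<le> linf_norm y"
    proof (rule cSUP_least)
    fix n show "y n \<le> linf_norm y" using bseq_abs_le[OF assms, of n] by linarith
  qed auto
  show "- linf_norm y \<le> (INF n. y n)"
    proof (rule cINF_greatest)
    fix n show "- linf_norm y \<le> y n" using bseq_abs_le[OF assms, of n] by linarith
  qed auto
qed

lemma linf_bound:
  assumes "\<And>n. \<bar>x n\<bar> \<le> r"
  shows "bseq x" "linf_norm x \<le> r"
proof -
  show "bseq x" unfolding bseq_def bdd_above_def using assms by blast
  show "linf_norm x \<le> r" unfolding linf_norm_def by (rule cSUP_least) (auto simp: assms)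
qed

lemma arith_helper:
  fixes t M s i \<sigma> e yn :: real
  shows "\<lbrakk>s - i \<le> \<sigma>; t \<le> (s + i) / 2 + M;
      (s + i) / 2 + M < t + e; i \<le> yn; yn \<le> s\<rbrakk>
     \<Longrightarrow> \<bar>yn - (- M + t)\<bar> \<le> \<sigma> / 2 + e"
proof -
  assume a: "s - i \<le> \<sigma>" "t \<le> (s + i) / 2 + M" "(s + i) / 2 + M < t + e" "i \<le> yn" "yn \<le> s"
  have "yn - (- M + t) \<le> \<sigma> / 2 + e" using a by (simp add: field_simps)
  moreover have "- M + t - yn \<le> \<sigma> / 2 + e" using a by (simp add: field_simps)
  ultimately show ?thesis by (simp add: abs_le_iff)
qed

theorem mainTheorem3:
  fixes L :: "rseq set" and N :: "rseq \<Rightarrow> real"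
  assumes "seq_subspace L"
    and "is_norm_on L N \<or> is_quasinorm_on L N \<or> (\<exists>a. is_alpha_norm_on a L N)"
    and "embeds_linf L N"
    and "emb_norm L N \<le> span_seq L N"
    and "span_seq L N < 2 * emb_norm L N"
  shows "\<not> maximally_noncompact_emb L N \<and> alpha_emb L N \<le> span_seq L N / 2"
proof -
  have Npos: "\<forall>x\<in>L. N x \<ge> 0 \<and> (N x = 0 \<longleftrightarrow> x = (\<lambda>n. 0))"
    using assms(2) unfolding is_norm_on_def is_quasinorm_on_def is_alpha_norm_on_def by blast
  have z: "(\<lambda>n. 0) \<in> L" using assms(1) unfolding seq_subspace_def by blast
  define B where "B = unit_ball L N"
  have zB: "(\<lambda>n. 0::real) \<in> B" using z Npos unfolding B_def unit_ball_def by auto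
  obtain C where C: "\<forall>x\<in>L. bseq x \<and> linf_norm x \<le> C * N x"
    using assms(3) unfolding embeds_linf_def by blast
  define D where "D = max C 0"
  have yB: "bseq y \<and> linf_norm y \<le> D" if "y \<in> B" for y
  proof -
    have "y \<in> L" "N y \<le> 1" using that unfolding B_def unit_ball_def by auto
    moreover have "N y \<ge> 0" using Npos \<open>y \<in> L\<close> by blast
    ultimately have "C * N y \<le> D"
    proof -
      have "C * N y \<le> D * N y" unfolding D_def using \<open>N y \<ge> 0\<close> by (simp add: mult_right_mono)
      also have "\<dots> \<le> D" using \<open>N y \<le> 1\<close> unfolding D_def by (simp add: mult_left_le)
      finally show ?thesis .
    qed
    moreover have "bseq y \<and> linf_norm y \<le> C * N y" using C \<open>y \<in> L\<close> by blast
    ultimately show ?thesis by linarith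
  qed
  define M where "M = emb_norm L N"
  define \<sigma> where "\<sigma> = span_seq L N"
  have MLe: "linf_norm y \<le> M" if "y \<in> B" for y
    unfolding M_def emb_norm_def B_def[symmetric]
    by (rule cSUP_upper[OF that]) (use yB in \<open>auto simp: bdd_above_def\<close>)
  have l0: "linf_norm (\<lambda>n. 0) = 0" unfolding linf_norm_def by simp
  have M0: "M \<ge> 0" using MLe[OF zB] l0 by simp
  have sig: "M \<le> \<sigma>" "\<sigma> < 2 * M" using assms(4,5) M_def \<sigma>_def by auto
  have spanle: "(SUP n. y n) - (INF n. y n) \<le> \<sigma>" if "y \<in> B" for y
  proof -
    have "bdd_above ((\<lambda>y. (SUP n. y n) - (INF n. y n)) ` B)"
    proof -
      have "(SUP n. y n) - (INF n. y n) \<le> 2 * D" if "y \<in> B" for y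
      proof -
        have "bseq y" "linf_norm y \<le> D" using yB[OF that] by auto
        thus ?thesis using bseq_sup_inf(3,4)[of y] by linarith
      qed
      thus ?thesis by (auto simp: bdd_above_def)
    qed
    thus ?thesis unfolding \<sigma>_def span_seq_def B_def[symmetric]
      by (rule cSUP_upper[OF that])
  qed
  define S where "S = {r. r > 0 \<and> (\<exists>Y. finite Y \<and> Y \<noteq> {} \<and> (\<forall>z\<in>Y. bseq z) \<and>
       unit_ball L N \<subseteq> (\<Union>z\<in>Y. {y. bseq (\<lambda>n. y n - z n) \<and> linf_norm (\<lambda>n. y n - z n) \<le> r}))}"
  have inS: "\<sigma>/2 + e \<in> S" if e: "e > 0" for e
  proof -
    define K where "K = nat (ceiling (2*M/e))"
    define Y where "Y = (\<lambda>k::nat. (\<lambda>n::nat. - M + real k * e)) ` {0..K}"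
    have "finite Y" "Y \<noteq> {}" unfolding Y_def by auto
    moreover have "\<forall>z\<in>Y. bseq z" unfolding Y_def bseq_def by auto
    moreover have "unit_ball L N \<subseteq> (\<Union>z\<in>Y. {y. bseq (\<lambda>n. y n - z n) \<and> linf_norm (\<lambda>n. y n - z n) \<le> \<sigma>/2 + e})"
    proof
      fix y assume y: "y \<in> unit_ball L N"
      hence yb: "y \<in> B" using B_def by simp
      have bsy: "bseq y" using yB[OF yb] by simp
      define s where "s = (SUP n. y n)"
      define i where "i = (INF n. y n)"
      define c where "c = (s + i) / 2"
      have si: "s - i \<le> \<sigma>" using spanle[OF yb] s_def i_def by simp
      have yn: "i \<le> y n \<and> y n \<le> s" for n using bseq_sup_inf[OF bsy] s_def i_def by simp
      have cM0: "-M \<le> c \<and> c \<le> M" using bseq_sup_inf(3,4)[OF bsy] MLe[OF yb] yn[of 0]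
        unfolding c_def s_def i_def by auto
      hence cM: "-M \<le> c" "c \<le> M" by auto
      define k where "k = nat (floor ((c + M)/e))"
      have f0: "(c+M)/e \<ge> 0" using cM e by simp
      have k1: "real k \<le> (c+M)/e" "(c+M)/e < real k + 1"
        unfolding k_def using f0 by linarith+
      have k2: "real k * e \<le> c + M" "c + M < real k * e + e"
        using k1 e by (simp_all add: field_simps)
      have "(c+M)/e \<le> 2*M/e" using cM e by (simp add: divide_right_mono)
      hence "floor ((c+M)/e) \<le> ceiling (2*M/e)"
        by (meson ceiling_mono floor_le_ceiling order_trans)
      hence "k \<le> K" unfolding k_def K_def by (rule nat_mono)
      define z where "z = (\<lambda>n::nat. - M + real k * e)"
      have zY: "z \<in> Y" unfolding Y_def z_def using \<open>k \<le> K\<close> by auto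
      have bnd: "\<bar>y n - z n\<bar> \<le> \<sigma>/2 + e" for n
      proof -
        have "z n = - M + real k * e" unfolding z_def by simp
        have "\<bar>y n - (- M + real k * e)\<bar> \<le> \<sigma>/2 + e"
          by (rule arith_helper[OF si k2[unfolded c_def] conjunct1[OF yn[of n]] conjunct2[OF yn[of n]]])
        thus ?thesis using \<open>z n = - M + real k * e\<close> by simp
      qed
      show "y \<in> (\<Union>z\<in>Y. {y. bseq (\<lambda>n. y n - z n) \<and> linf_norm (\<lambda>n. y n - z n) \<le> \<sigma>/2 + e})"
        using linf_bound[of "\<lambda>n. y n - z n", OF bnd] by (intro UN_I[OF zY]) simp
    qed
    moreover have "\<sigma>/2 + e > 0" using sig M0 e by simp
    ultimately show ?thesis unfolding S_def by (intro CollectI conjI exI[of _ Y]) auto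
  qed
  have bb: "bdd_below S" unfolding S_def bdd_below_def by (rule exI[of _ 0]) auto
  have al: "alpha_emb L N \<le> \<sigma>/2"
  proof (rule field_le_epsilon)
    fix e :: real assume "e > 0"
    have "alpha_emb L N = Inf S" unfolding alpha_emb_def S_def by simp
    also have "\<dots> \<le> \<sigma>/2 + e" by (rule cInf_lower[OF inS[OF \<open>e>0\<close>] bb])
    finally show "alpha_emb L N \<le> \<sigma>/2 + e" .
  qed
  have "alpha_emb L N < M" using al sig by simp
  thus ?thesis using al unfolding maximally_noncompact_emb_def M_def \<sigma>_def by simp
qed

end
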